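(* In the road network model, suppose the arrival vectors $\{A(t)\}_{t\ge1}$ are independent and identically distributed with expectation $a$. If $a\notin\bar{\mathcal A}$, then every policy (every choice of service proportions $P^j_\sigma(t)\ge0$ with $\sum_{\sigma\in\mathcal S_j}P^j_\sigma(t)\le 1-L_0/T$ for all $j,t$) is unstable, i.e. $$\lim_{\tau\to\infty}\mathbb E\Big[\frac1\tau\sum_{t=1}^\tau Q^\Sigma(t)\Big]=\infty.$$
   Context: Road network model. $\mathcal J$ is a finite set of junctions; each junction $j$ has a finite set of in-roads $\mathcal I_j$, pairwise disjoint, $\mathcal I=\bigcup_j\mathcal I_j$; $j(i)$ is the junction containing in-road $i$. Each junction $j$ has a finite set $\mathcal S_j$ of phases $\sigma=(\sigma_i)_{i\in j}$, $\sigma_i\ge0$. $\mathcal L\subseteq\mathcal I\times\mathcal I$ is the set of links. Common cycle length $T>0$ and lost time $L_0\in[0,T)$. Time slotted $t=0,1,\dots$. $Q(t)\in\mathbb Z_+^{\mathcal I}$ are queue lengths, $S_i(t)\le S_{\max}$ potential services with $\mathbb E[S_i(t)\mid Q(t)]=\sum_{\sigma\in\mathcal S_{j(i)}}\sigma_iP^{j(i)}_\sigma(t)$, $p_{ii'}(t)\in[0,1]$ stationary turning proportions with mean $\bar p_{ii'}$ independent of queues and services, $A_i(t)$ external arrivals. Dynamics: $Q_i(t+1)=Q_i(t)-S_i(t)\wedge Q_i(t)+A_i(t)+\sum_{i':i'i\in\mathcal L}[S_{i'}(t)\wedge Q_{i'}(t)]p_{i'i}(t)$. Stability region: $\mathcal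 A$ is the set of $a\ge0$ for which there exist positive $\rho=(\rho^j_\sigma)$ and positive $s=(s_i)$ with $a_i+\sum_{i':i'i\in\mathcal L}s_{i'}\bar p_{i'i}<s_i$ for all $i$, $\sum_{\sigma\in\mathcal S_j}\rho^j_\sigma\le 1-L_0/T$ for all $j$, and $s_i\le\sum_{\sigma\in\mathcal S_{j(i)}}\rho^{j(i)}_\sigma\sigma_i$ for all $i$. $\bar{\mathcal A}$ is its closure (the same conditions with non-strict inequalities). $Q^\Sigma(t)=\sum_iQ_i(t)$. *)

theory Defs
  imports "HOL-Probability.Probability"
begin

text \<open>Road network: junctions J, in-roads In j of junction j, phases Ph j,
links L, mean turning proportions pbar, cycle length T, lost time L0.\<close>

definition in_roads :: "'j set \<Rightarrow> ('j \<Rightarrow> 'r set) \<Rightarrow> 'r set" where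
  "in_roads J In = (\<Union>j\<in>J. In j)"

text \<open>Closure of the stability region: the defining conditions of the
stability region with all inequalities non-strict.\<close>

definition closed_stab_region ::
  "'j set \<Rightarrow> ('j \<Rightarrow> 'r set) \<Rightarrow> ('j \<Rightarrow> ('r \<Rightarrow> real) set) \<Rightarrow> ('r \<times> 'r) set
   \<Rightarrow> ('r \<Rightarrow> 'r \<Rightarrow> real) \<Rightarrow> real \<Rightarrow> real \<Rightarrow> ('r \<Rightarrow> real) set" where
  "closed_stab_region J In Ph L pbar T L0 =
    {a. (\<forall>i\<in>in_roads J In. a i \<ge> 0) \<and>
        (\<exists>(\<rho>::'j \<Rightarrow> ('r \<Rightarrow> real) \<Rightarrow> real) (s::'r \<Rightarrow> real).
           (\<forall>j\<in>J. \<forall>\<sigma>\<in>Ph j. \<rho> j \<sigma> \<ge> 0) \<and>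
           (\<forall>i\<in>in_roads J In. s i \<ge> 0) \<and>
           (\<forall>i\<in>in_roads J In. a i + (\<Sum>i'\<in>{i'. (i', i) \<in> L}. s i' * pbar i' i) \<le> s i) \<and>
           (\<forall>j\<in>J. (\<Sum>\<sigma>\<in>Ph j. \<rho> j \<sigma>) \<le> 1 - L0 / T) \<and>
           (\<forall>j\<in>J. \<forall>i\<in>In j. s i \<le> (\<Sum>\<sigma>\<in>Ph j. \<rho> j \<sigma> * \<sigma> i)))}"

definition gen_sigma :: "'w measure \<Rightarrow> 'r set \<Rightarrow> ('w \<Rightarrow> 'r \<Rightarrow> real) \<Rightarrow> 'w measure" where
  "gen_sigma M I X = vimage_algebra (space M) (\<lambda>\<omega>. restrict (X \<omega>) I) (PiM I (\<lambda>_. borel))"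

end

theory Submission imports Defs begin

lemma finite_subseq:
  fixes f :: "nat \<Rightarrow> 'k \<Rightarrow> real"
  assumes "finite K" "\<And>n k. k \<in> K \<Longrightarrow> \<bar>f n k\<bar> \<le> B"
  shows "\<exists>r g. strict_mono r \<and> (\<forall>k\<in>K. (\<lambda>n. f (r n) k) \<longlonglongrightarrow> g k)"
  using assms
proof (induction K rule: finite_induct)
  case empty
  then show ?case by (auto intro: strict_mono_id)
next
  case (insert x F)
  then obtain r g where r: "strict_mono r" and g: "\<forall>k\<in>F. (\<lambda>n. f (r n) k) \<longlonglongrightarrow> g k"
    by auto
  have "bounded (range (\<lambda>n. f (r n) x))"
    using insert.prems by (auto simp: bounded_iff)
  then obtain l r' where r': "strict_mono r'" and l: "((\<lambda>n. f (r n) x) \<circ> r') \<longlonglongrightarrow> l"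
    using bounded_imp_convergent_subsequence by blast
  show ?case
  proof (intro exI conjI ballI)
    show "strict_mono (r \<circ> r')" using r r' by (simp add: strict_mono_o)
    fix k assume k: "k \<in> insert x F"
    show "(\<lambda>n. f ((r \<circ> r') n) k) \<longlonglongrightarrow> (g(x := l)) k"
    proof (cases "k = x")
      case True then show ?thesis using l by (simp add: comp_def)
    next
      case False
      then have "k \<in> F" using k by auto
      then have "(\<lambda>n. f (r n) k) \<longlonglongrightarrow> g k" using g by auto
      from LIMSEQ_subseq_LIMSEQ[OF this r'] show ?thesis using False by (simp add: comp_def)
    qed
  qed
qed

lemma closed_region:
  fixes J :: "'j set" and In :: "'j \<Rightarrow> 'r set" and jun :: "'r \<Rightarrow> 'j"
    and Ph :: "'j \<Rightarrow> ('r \<Rightarrow> real) set" and L :: "('r \<times> 'r) set"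
    and T L0 Smax :: real and pbar :: "'r \<Rightarrow> 'r \<Rightarrow> real" and a :: "'r \<Rightarrow> real"
  assumes finI: "finite (in_roads J In)" and finPh: "\<And>j. j \<in> J \<Longrightarrow> finite (Ph j)"
    and finJ: "finite J" and links: "L \<subseteq> in_roads J In \<times> in_roads J In"
    and disj: "\<And>j j'. j \<in> J \<Longrightarrow> j' \<in> J \<Longrightarrow> j \<noteq> j' \<Longrightarrow> In j \<inter> In j' = {}"
    and jun: "\<And>i. i \<in> in_roads J In \<Longrightarrow> jun i \<in> J \<and> i \<in> In (jun i)"
    and a_nn: "\<And>i. i \<in> in_roads J In \<Longrightarrow> a i \<ge> 0"
    and approx: "\<And>\<epsilon>. \<epsilon> > 0 \<Longrightarrow> \<exists>\<rho> s.
        (\<forall>j\<in>J. \<forall>\<sigma>\<in>Ph j. 0 \<le> \<rho> j \<sigma> \<and> \<rho> j \<sigma> \<le> 1) \<and>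
        (\<forall>j\<in>J. (\<Sum>\<sigma>\<in>Ph j. \<rho> j \<sigma>) \<le> 1 - L0 / T) \<and>
        (\<forall>i\<in>in_roads J In. 0 \<le> s i \<and> s i \<le> Smax) \<and>
        (\<forall>i\<in>in_roads J In. s i \<le> (\<Sum>\<sigma>\<in>Ph (jun i). \<rho> (jun i) \<sigma> * \<sigma> i)) \<and>
        (\<forall>i\<in>in_roads J In. a i + (\<Sum>i'\<in>{i'. (i', i) \<in> L}. s i' * pbar i' i) - s i \<le> \<epsilon>)"
  shows "a \<in> closed_stab_region J In Ph L pbar T L0"
proof -
  define I where "I = in_roads J In"
  define Pr where "Pr = (\<lambda>\<epsilon> (\<rho>:: 'j \<Rightarrow> ('r \<Rightarrow> real) \<Rightarrow> real) (s::'r \<Rightarrow> real).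
        (\<forall>j\<in>J. \<forall>\<sigma>\<in>Ph j. 0 \<le> \<rho> j \<sigma> \<and> \<rho> j \<sigma> \<le> 1) \<and>
        (\<forall>j\<in>J. (\<Sum>\<sigma>\<in>Ph j. \<rho> j \<sigma>) \<le> 1 - L0 / T) \<and>
        (\<forall>i\<in>I. 0 \<le> s i \<and> s i \<le> Smax) \<and>
        (\<forall>i\<in>I. s i \<le> (\<Sum>\<sigma>\<in>Ph (jun i). \<rho> (jun i) \<sigma> * \<sigma> i)) \<and>
        (\<forall>i\<in>I. a i + (\<Sum>i'\<in>{i'. (i', i) \<in> L}. s i' * pbar i' i) - s i \<le> \<epsilon>))"
  have "\<forall>n. \<exists>x. Pr (inverse (real (Suc n))) (fst x) (snd x)"
  proof
    fix n
    from approx[of "inverse (real (Suc n))"] obtain \<rho> s where "Pr (inverse (real (Suc n))) \<rho> s"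
      unfolding Pr_def I_def by auto
    then show "\<exists>x. Pr (inverse (real (Suc n))) (fst x) (snd x)" by (intro exI[of _ "(\<rho>, s)"]) simp
  qed
  then obtain x where x: "\<And>n. Pr (inverse (real (Suc n))) (fst (x n)) (snd (x n))"
    by metis
  define \<rho> where "\<rho> n = fst (x n)" for n
  define s where "s n = snd (x n)" for n
  have P: "\<And>n. Pr (inverse (real (Suc n))) (\<rho> n) (s n)" using x \<rho>_def s_def by simp
  have "\<exists>r g. strict_mono r \<and> (\<forall>k\<in>I. (\<lambda>n. s (r n) k) \<longlonglongrightarrow> g k)"
    by (rule finite_subseq[where B = Smax]) (use finI P in \<open>auto simp: I_def Pr_def\<close>)
  then obtain r1 gs where r1: "strict_mono r1" and gs: "\<forall>k\<in>I. (\<lambda>n. s (r1 n) k) \<longlonglongrightarrow> gs k" by blast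
  have finS: "finite (Sigma J Ph)" using finJ finPh by auto
  define F where "F n = (\<lambda>(j,\<sigma>). \<rho> (r1 n) j \<sigma>)" for n
  have "\<exists>r g. strict_mono r \<and> (\<forall>k\<in>Sigma J Ph. (\<lambda>n. F (r n) k) \<longlonglongrightarrow> g k)"
    by (rule finite_subseq[where B = 1]) (use finS P in \<open>auto simp: I_def Pr_def F_def\<close>)
  then obtain r2 g\<rho> where r2: "strict_mono r2"
    and g\<rho>: "\<forall>k\<in>Sigma J Ph. (\<lambda>n. F (r2 n) k) \<longlonglongrightarrow> g\<rho> k" by blast
  define R where "R = r1 \<circ> r2"
  define \<rho>' where "\<rho>' j \<sigma> = g\<rho> (j, \<sigma>)" for j \<sigma>
  have lims: "\<And>i. i \<in> I \<Longrightarrow> (\<lambda>n. s (R n) i) \<longlonglongrightarrow> gs i"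
    using gs LIMSEQ_subseq_LIMSEQ[OF _ r2] unfolding R_def comp_def by blast
  have limr: "\<And>j \<sigma>. j \<in> J \<Longrightarrow> \<sigma> \<in> Ph j \<Longrightarrow> (\<lambda>n. \<rho> (R n) j \<sigma>) \<longlonglongrightarrow> \<rho>' j \<sigma>"
    using g\<rho> unfolding R_def \<rho>'_def F_def by auto
  have smR: "strict_mono R" using r1 r2 by (simp add: R_def strict_mono_o)
  have eps: "(\<lambda>n. inverse (real (Suc (R n)))) \<longlonglongrightarrow> 0"
    using LIMSEQ_subseq_LIMSEQ[OF LIMSEQ_inverse_real_of_nat smR] by (simp add: comp_def)
  have PR: "\<And>n. Pr (inverse (real (Suc (R n)))) (\<rho> (R n)) (s (R n))" using P by simp
  show ?thesis
    unfolding closed_stab_region_def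
  proof (intro CollectI conjI exI[of _ \<rho>'] exI[of _ gs] ballI)
    fix i assume "i \<in> in_roads J In"
    then show "0 \<le> a i" using a_nn by simp
  next
    fix j \<sigma> assume "j \<in> J" "\<sigma> \<in> Ph j"
    then show "0 \<le> \<rho>' j \<sigma>"
      using limr PR by (intro LIMSEQ_le_const[OF limr]) (auto simp: Pr_def)
  next
    fix i assume i: "i \<in> in_roads J In"
    then show "0 \<le> gs i"
      using PR by (intro LIMSEQ_le_const[OF lims]) (auto simp: Pr_def I_def)
  next
    fix i assume i: "i \<in> in_roads J In"
    have sub2: "{i'. (i', i) \<in> L} \<subseteq> I" using links by (auto simp: I_def)
    have "(\<lambda>n. a i + (\<Sum>i'\<in>{i'. (i', i) \<in> L}. s (R n) i' * pbar i' i) - s (R n) i)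
        \<longlonglongrightarrow> a i + (\<Sum>i'\<in>{i'. (i', i) \<in> L}. gs i' * pbar i' i) - gs i"
      using i sub2 by (intro tendsto_diff tendsto_add tendsto_const tendsto_sum tendsto_mult lims)
        (auto simp: I_def)
    then have "a i + (\<Sum>i'\<in>{i'. (i', i) \<in> L}. gs i' * pbar i' i) - gs i \<le> 0"
      using PR i by (intro LIMSEQ_le[OF _ eps]) (auto simp: Pr_def I_def)
    then show "a i + (\<Sum>i'\<in>{i'. (i', i) \<in> L}. gs i' * pbar i' i) \<le> gs i" by simp
  next
    fix j assume j: "j \<in> J"
    have "(\<lambda>n. \<Sum>\<sigma>\<in>Ph j. \<rho> (R n) j \<sigma>) \<longlonglongrightarrow> (\<Sum>\<sigma>\<in>Ph j. \<rho>' j \<sigma>)"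
      using j by (intro tendsto_sum limr)
    then show "(\<Sum>\<sigma>\<in>Ph j. \<rho>' j \<sigma>) \<le> 1 - L0 / T"
      using PR j by (intro LIMSEQ_le_const2) (auto simp: Pr_def)
  next
    fix j i assume j: "j \<in> J" and i: "i \<in> In j"
    have iI: "i \<in> I" using i j by (auto simp: I_def in_roads_def)
    have jj: "jun i = j" using jun[of i] disj[of j "jun i"] iI i j by (auto simp: I_def)
    have "(\<lambda>n. \<Sum>\<sigma>\<in>Ph j. \<rho> (R n) j \<sigma> * \<sigma> i) \<longlonglongrightarrow> (\<Sum>\<sigma>\<in>Ph j. \<rho>' j \<sigma> * \<sigma> i)"
      using j by (intro tendsto_sum tendsto_mult limr tendsto_const)
    then show "gs i \<le> (\<Sum>\<sigma>\<in>Ph j. \<rho>' j \<sigma> * \<sigma> i)"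
      using PR iI jj by (intro LIMSEQ_le[OF lims[OF iI]]) (auto simp: Pr_def)
  qed
qed

lemma (in prob_space) indep_prod_integral:
  fixes X Y :: "'a \<Rightarrow> real"
  assumes ind: "indep_set (sets V1) (sets V2)"
    and sp1: "space V1 = space M" and sp2: "space V2 = space M"
    and X1: "X \<in> borel_measurable V1" and Y2: "Y \<in> borel_measurable V2"
    and iX: "integrable M X" and iY: "integrable M Y"
  shows "(\<integral>\<omega>. Y \<omega> * X \<omega> \<partial>M) = (\<integral>\<omega>. Y \<omega> \<partial>M) * (\<integral>\<omega>. X \<omega> \<partial>M)"
proof -
  have sX: "sigma_sets (space M) {X -` A \<inter> space M | A. A \<in> sets borel} \<subseteq> sets V1"
    using sets.sigma_sets_subset[of "{X -` A \<inter> space M | A. A \<in> sets borel}" V1] X1 sp1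
    by (auto simp: measurable_def)
  have sY: "sigma_sets (space M) {Y -` A \<inter> space M | A. A \<in> sets borel} \<subseteq> sets V2"
    using sets.sigma_sets_subset[of "{Y -` A \<inter> space M | A. A \<in> sets borel}" V2] Y2 sp2
    by (auto simp: measurable_def)
  have "indep_var borel Y borel X"
    unfolding indep_var_eq
  proof (intro conjI)
    show "random_variable borel Y" using iY by auto
    show "random_variable borel X" using iX by auto
    show "indep_set (sigma_sets (space M) {Y -` A \<inter> space M | A. A \<in> sets borel})
       (sigma_sets (space M) {X -` A \<inter> space M | A. A \<in> sets borel})"
    proof -
      have e1: "sets V1 \<subseteq> events" and e2: "sets V2 \<subseteq> events"
        and pr: "\<And>a b. a \<in> sets V1 \<Longrightarrow> b \<in> sets V2 \<Longrightarrow> prob (a \<inter> b) = prob a * prob b"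
        using ind unfolding indep_sets2_eq by blast+
      show ?thesis unfolding indep_sets2_eq
      proof (intro conjI ballI)
        show "sigma_sets (space M) {Y -` A \<inter> space M | A. A \<in> sets borel} \<subseteq> events"
          using sY e2 by (rule order_trans)
        show "sigma_sets (space M) {X -` A \<inter> space M | A. A \<in> sets borel} \<subseteq> events"
          using sX e1 by (rule order_trans)
        fix a b assume a: "a \<in> sigma_sets (space M) {Y -` A \<inter> space M | A. A \<in> sets borel}"
          and b: "b \<in> sigma_sets (space M) {X -` A \<inter> space M | A. A \<in> sets borel}"
        have "prob (b \<inter> a) = prob b * prob a" using a b sX sY by (intro pr) auto
        then show "prob (a \<inter> b) = prob a * prob b" by (simp add: Int_commute mult.commute)
      qed
    qed
  qed
  then show ?thesis using indep_var_lebesgue_integral iX iY by blast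
qed

lemma dsum_swap:
  fixes f :: "nat \<Rightarrow> 'k \<Rightarrow> real"
  shows "(\<Sum>t\<in>T. \<Sum>u\<in>U t. \<Sum>k\<in>K. f u k) = (\<Sum>k\<in>K. \<Sum>t\<in>T. \<Sum>u\<in>U t. f u k)"
proof -
  have "(\<Sum>t\<in>T. \<Sum>u\<in>U t. \<Sum>k\<in>K. f u k) = (\<Sum>t\<in>T. \<Sum>k\<in>K. \<Sum>u\<in>U t. f u k)"
    by (rule sum.cong[OF refl]) (rule sum.swap)
  also have "\<dots> = (\<Sum>k\<in>K. \<Sum>t\<in>T. \<Sum>u\<in>U t. f u k)" by (rule sum.swap)
  finally show ?thesis .
qed
lemma dsum_lin:
  fixes f :: "nat \<Rightarrow> 'k \<Rightarrow> real" and h :: "nat \<Rightarrow> real"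
  shows "(\<Sum>t\<in>T. \<Sum>u\<in>U t. c + (\<Sum>k\<in>K. f u k * w k) - h u) =
    (\<Sum>t\<in>T. \<Sum>u\<in>U t. 1) * c + (\<Sum>k\<in>K. (\<Sum>t\<in>T. \<Sum>u\<in>U t. f u k) * w k) - (\<Sum>t\<in>T. \<Sum>u\<in>U t. h u)"
proof -
  have "(\<Sum>t\<in>T. \<Sum>u\<in>U t. c + (\<Sum>k\<in>K. f u k * w k) - h u) =
    (\<Sum>t\<in>T. \<Sum>u\<in>U t. c) + (\<Sum>t\<in>T. \<Sum>u\<in>U t. \<Sum>k\<in>K. f u k * w k) - (\<Sum>t\<in>T. \<Sum>u\<in>U t. h u)"
    by (simp add: sum.distrib sum_subtractf)
  also have "(\<Sum>t\<in>T. \<Sum>u\<in>U t. \<Sum>k\<in>K. f u k * w k) = (\<Sum>k\<in>K. (\<Sum>t\<in>T. \<Sum>u\<in>U t. f u k) * w k)"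
    by (simp add: dsum_swap sum_distrib_right)
  also have "(\<Sum>t\<in>T. \<Sum>u\<in>U t. c) = (\<Sum>t\<in>T. \<Sum>u\<in>U t. 1) * c"
    by (simp add: sum_distrib_right)
  finally show ?thesis .
qed

lemma Nats_nonneg: "(x::real) \<in> \<nat> \<Longrightarrow> 0 \<le> x"
  by (induct rule: Nats_induct) auto

lemma integral_le_nn:
  fixes f :: "'a \<Rightarrow> real" assumes f: "integrable M f"
  shows "ennreal (\<integral>x. f x \<partial>M) \<le> (\<integral>\<^sup>+x. ennreal (f x) \<partial>M)"
proof -
  have "(\<integral>x. f x \<partial>M) \<le> (\<integral>x. max (f x) 0 \<partial>M)" using f by (intro integral_mono) auto
  then have "ennreal (\<integral>x. f x \<partial>M) \<le> ennreal (\<integral>x. max (f x) 0 \<partial>M)" by (rule ennreal_leI)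
  also have "ennreal (\<integral>x. max (f x) 0 \<partial>M) = (\<integral>\<^sup>+x. ennreal (max (f x) 0) \<partial>M)"
    using f by (intro nn_integral_eq_integral[symmetric]) auto
  also have "\<dots> = (\<integral>\<^sup>+x. ennreal (f x) \<partial>M)"
    by (intro nn_integral_cong) (auto simp: max_def ennreal_neg)
  finally show ?thesis .
qed
lemma double_count:
  "2 * (\<Sum>t\<in>{1..\<tau>}. \<Sum>u\<in>{1..<t}. (1::real)) = real \<tau> * (real \<tau> - 1)"
proof (induction \<tau>)
  case 0 then show ?case by simp
next
  case (Suc n)
  have "(\<Sum>t\<in>{1..Suc n}. \<Sum>u\<in>{1..<t}. (1::real)) = (\<Sum>t\<in>{1..n}. \<Sum>u\<in>{1..<t}. (1::real)) + real n"
    by simp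
  then show ?case using Suc by (simp add: algebra_simps)
qed

theorem proposition1:
  fixes J :: "'j set" and In :: "'j \<Rightarrow> 'r set" and jun :: "'r \<Rightarrow> 'j"
    and Ph :: "'j \<Rightarrow> ('r \<Rightarrow> real) set" and L :: "('r \<times> 'r) set"
    and T L0 Smax :: real
    and M :: "'w measure"
    and Q S A :: "nat \<Rightarrow> 'w \<Rightarrow> 'r \<Rightarrow> real"
    and p :: "nat \<Rightarrow> 'w \<Rightarrow> 'r \<Rightarrow> 'r \<Rightarrow> real"
    and pbar :: "'r \<Rightarrow> 'r \<Rightarrow> real"
    and P :: "nat \<Rightarrow> 'w \<Rightarrow> 'j \<Rightarrow> ('r \<Rightarrow> real) \<Rightarrow> real"
    and a :: "'r \<Rightarrow> real"
  defines "I \<equiv> in_roads J In"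
  assumes finJ: "finite J"
    and finIn: "\<And>j. j \<in> J \<Longrightarrow> finite (In j)"
    and disj: "\<And>j j'. j \<in> J \<Longrightarrow> j' \<in> J \<Longrightarrow> j \<noteq> j' \<Longrightarrow> In j \<inter> In j' = {}"
    and jun: "\<And>i. i \<in> I \<Longrightarrow> jun i \<in> J \<and> i \<in> In (jun i)"
    and finPh: "\<And>j. j \<in> J \<Longrightarrow> finite (Ph j)"
    and Ph_nonneg: "\<And>j \<sigma> i. j \<in> J \<Longrightarrow> \<sigma> \<in> Ph j \<Longrightarrow> i \<in> In j \<Longrightarrow> \<sigma> i \<ge> 0"
    and links: "L \<subseteq> I \<times> I"
    and T_pos: "T > 0" and L0: "0 \<le> L0" "L0 < T"
    and prob: "prob_space M"
    \<comment> \<open>queues: nonnegative integers, random variables\<close>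
    and Q_nat: "\<And>t \<omega> i. \<omega> \<in> space M \<Longrightarrow> i \<in> I \<Longrightarrow> Q t \<omega> i \<in> \<nat>"
    and Q_meas: "\<And>t i. i \<in> I \<Longrightarrow> (\<lambda>\<omega>. Q t \<omega> i) \<in> borel_measurable M"
    \<comment> \<open>potential services: bounded nonnegative integers with prescribed conditional mean\<close>
    and S_nat: "\<And>t \<omega> i. \<omega> \<in> space M \<Longrightarrow> i \<in> I \<Longrightarrow> S t \<omega> i \<in> \<nat>"
    and S_bound: "\<And>t \<omega> i. \<omega> \<in> space M \<Longrightarrow> i \<in> I \<Longrightarrow> S t \<omega> i \<le> Smax"
    and S_meas: "\<And>t i. i \<in> I \<Longrightarrow> (\<lambda>\<omega>. S t \<omega> i) \<in> borel_measurable M"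
    \<comment> \<open>policy: service proportions\<close>
    and P_meas: "\<And>t j \<sigma>. j \<in> J \<Longrightarrow> \<sigma> \<in> Ph j \<Longrightarrow> (\<lambda>\<omega>. P t \<omega> j \<sigma>) \<in> borel_measurable M"
    and P_nonneg: "\<And>t \<omega> j \<sigma>. \<omega> \<in> space M \<Longrightarrow> j \<in> J \<Longrightarrow> \<sigma> \<in> Ph j \<Longrightarrow> P t \<omega> j \<sigma> \<ge> 0"
    and P_sum: "\<And>t \<omega> j. \<omega> \<in> space M \<Longrightarrow> j \<in> J \<Longrightarrow> (\<Sum>\<sigma>\<in>Ph j. P t \<omega> j \<sigma>) \<le> 1 - L0 / T"
    and S_cond: "\<And>t i. i \<in> I \<Longrightarrow>
        AE \<omega> in M. real_cond_exp M (gen_sigma M I (Q t)) (\<lambda>\<omega>. S t \<omega> i) \<omega>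
                    = (\<Sum>\<sigma>\<in>Ph (jun i). \<sigma> i * P t \<omega> (jun i) \<sigma>)"
    \<comment> \<open>turning proportions: values in [0,1], stationary with mean pbar, independent of queues and services\<close>
    and p_range: "\<And>t \<omega> i' i. \<omega> \<in> space M \<Longrightarrow> (i', i) \<in> L \<Longrightarrow> 0 \<le> p t \<omega> i' i \<and> p t \<omega> i' i \<le> 1"
    and p_meas: "\<And>t i' i. (i', i) \<in> L \<Longrightarrow> (\<lambda>\<omega>. p t \<omega> i' i) \<in> borel_measurable M"
    and p_stat: "\<And>t. distr M (PiM L (\<lambda>_. borel)) (\<lambda>\<omega>. \<lambda>l\<in>L. p t \<omega> (fst l) (snd l))
                   = distr M (PiM L (\<lambda>_. borel)) (\<lambda>\<omega>. \<lambda>l\<in>L. p 0 \<omega> (fst l) (snd l))"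
    and p_mean: "\<And>t i' i. (i', i) \<in> L \<Longrightarrow> (\<integral>\<omega>. p t \<omega> i' i \<partial>M) = pbar i' i"
    and p_indep: "\<And>t. prob_space.indep_set M
        (sets (vimage_algebra (space M) (\<lambda>\<omega>. \<lambda>l\<in>L. p t \<omega> (fst l) (snd l)) (PiM L (\<lambda>_. borel))))
        (sets (vimage_algebra (space M) (\<lambda>\<omega>. (restrict (Q t \<omega>) I, restrict (S t \<omega>) I))
                 (PiM I (\<lambda>_. borel) \<Otimes>\<^sub>M PiM I (\<lambda>_. borel))))"
    \<comment> \<open>arrivals: nonnegative integers; A(t), t >= 1, i.i.d. with expectation a\<close>
    and A_nat: "\<And>t \<omega> i. \<omega> \<in> space M \<Longrightarrow> i \<in> I \<Longrightarrow> A t \<omega> i \<in> \<nat>"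
    and A_meas: "\<And>t i. i \<in> I \<Longrightarrow> (\<lambda>\<omega>. A t \<omega> i) \<in> borel_measurable M"
    and A_indep: "prob_space.indep_vars M (\<lambda>_. PiM I (\<lambda>_. borel)) (\<lambda>t \<omega>. restrict (A t \<omega>) I) {1..}"
    and A_ident: "\<And>t. t \<ge> 1 \<Longrightarrow> distr M (PiM I (\<lambda>_. borel)) (\<lambda>\<omega>. restrict (A t \<omega>) I)
                                 = distr M (PiM I (\<lambda>_. borel)) (\<lambda>\<omega>. restrict (A 1 \<omega>) I)"
    and A_mean: "\<And>i. i \<in> I \<Longrightarrow> integrable M (\<lambda>\<omega>. A 1 \<omega> i) \<and> (\<integral>\<omega>. A 1 \<omega> i \<partial>M) = a i"
    \<comment> \<open>queue dynamics\<close>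
    and dyn: "\<And>t \<omega> i. \<omega> \<in> space M \<Longrightarrow> i \<in> I \<Longrightarrow>
        Q (Suc t) \<omega> i = Q t \<omega> i - min (S t \<omega> i) (Q t \<omega> i) + A t \<omega> i
          + (\<Sum>i'\<in>{i'. (i', i) \<in> L}. min (S t \<omega> i') (Q t \<omega> i') * p t \<omega> i' i)"
    and a_notin: "a \<notin> closed_stab_region J In Ph L pbar T L0"
  shows "((\<lambda>\<tau>::nat. \<integral>\<^sup>+\<omega>. ennreal ((1 / real \<tau>) * (\<Sum>t\<in>{1..\<tau>}. \<Sum>i\<in>I. Q t \<omega> i)) \<partial>M)
           \<longlongrightarrow> \<infinity>) sequentially"
  proof -
  interpret prob_space M by (rule prob)
  have finI: "finite I" using finJ finIn by (auto simp: I_def in_roads_def)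
  have LT: "0 \<le> L0 / T" "L0 / T < 1" using T_pos L0 by (auto simp: divide_simps)
  have LI: "\<And>i. {i'. (i', i) \<in> L} \<subseteq> I" using links by auto
  have finL: "\<And>i. finite {i'. (i', i) \<in> L}" using LI finI by (meson finite_subset)
  have Qnn: "\<And>t \<omega> i. \<omega> \<in> space M \<Longrightarrow> i \<in> I \<Longrightarrow> 0 \<le> Q t \<omega> i"
    using Q_nat by (intro Nats_nonneg)
  have Snn: "\<And>t \<omega> i. \<omega> \<in> space M \<Longrightarrow> i \<in> I \<Longrightarrow> 0 \<le> S t \<omega> i"
    using S_nat by (intro Nats_nonneg)
  define D where "D t \<omega> i = min (S t \<omega> i) (Q t \<omega> i)" for t \<omega> i
  define g where "g t \<omega> i = A t \<omega> i + (\<Sum>i'\<in>{i'. (i', i) \<in> L}. D t \<omega> i' * p t \<omega> i' i) - D t \<omega> i"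
    for t \<omega> i
  have Dnn: "\<And>t \<omega> i. \<omega> \<in> space M \<Longrightarrow> i \<in> I \<Longrightarrow> 0 \<le> D t \<omega> i \<and> D t \<omega> i \<le> S t \<omega> i \<and> D t \<omega> i \<le> Smax"
  proof -
    fix t \<omega> i assume w: "\<omega> \<in> space M" and i: "i \<in> I"
    show "0 \<le> D t \<omega> i \<and> D t \<omega> i \<le> S t \<omega> i \<and> D t \<omega> i \<le> Smax"
      using Qnn[OF w i, of t] Snn[OF w i, of t] S_bound[OF w i, of t] by (auto simp: D_def)
  qed
  have tele: "\<And>t \<omega> i. \<omega> \<in> space M \<Longrightarrow> i \<in> I \<Longrightarrow> Q (Suc t) \<omega> i = Q 1 \<omega> i + (\<Sum>u\<in>{1..t}. g u \<omega> i)"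
  proof -
    fix t \<omega> i assume w: "\<omega> \<in> space M" and i: "i \<in> I"
    show "Q (Suc t) \<omega> i = Q 1 \<omega> i + (\<Sum>u\<in>{1..t}. g u \<omega> i)"
    proof (induction t)
      case 0 then show ?case by simp
    next
      case (Suc t)
      have "Q (Suc (Suc t)) \<omega> i = Q (Suc t) \<omega> i + g (Suc t) \<omega> i"
        using dyn[OF w i, of "Suc t"] by (simp add: g_def D_def)
      then show ?case using Suc by simp
    qed
  qed
  have lower: "\<And>t \<omega> i. \<omega> \<in> space M \<Longrightarrow> i \<in> I \<Longrightarrow> t \<ge> 1 \<Longrightarrow> (\<Sum>u\<in>{1..<t}. g u \<omega> i) \<le> Q t \<omega> i"
  proof -
    fix t :: nat and \<omega> i assume w: "\<omega> \<in> space M" and i: "i \<in> I" and t: "t \<ge> 1"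
    then obtain t' where t': "t = Suc t'" by (cases t) auto
    have "{1..<t} = {1..t'}" using t' by auto
    then show "(\<Sum>u\<in>{1..<t}. g u \<omega> i) \<le> Q t \<omega> i"
      using tele[OF w i, of t'] Qnn[OF w i, of 1] t' by simp
  qed
  have A_int: "\<And>u i. u \<ge> 1 \<Longrightarrow> i \<in> I \<Longrightarrow> integrable M (\<lambda>\<omega>. A u \<omega> i) \<and> (\<integral>\<omega>. A u \<omega> i \<partial>M) = a i"
  proof -
    fix u :: nat and i assume u: "u \<ge> 1" and i: "i \<in> I"
    have m: "(\<lambda>\<omega>. restrict (A v \<omega>) I) \<in> measurable M (PiM I (\<lambda>_. borel))" for v
      using A_meas by (intro measurable_restrict) auto
    have c: "(\<lambda>x. x i) \<in> borel_measurable (PiM I (\<lambda>_. borel))"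
      using i by (rule measurable_component_singleton)
    have "integrable M (\<lambda>\<omega>. A u \<omega> i) = integrable (distr M (PiM I (\<lambda>_. borel)) (\<lambda>\<omega>. restrict (A u \<omega>) I)) (\<lambda>x. x i)"
      using integrable_distr_eq[OF m c] i by simp
    also have "\<dots> = integrable (distr M (PiM I (\<lambda>_. borel)) (\<lambda>\<omega>. restrict (A 1 \<omega>) I)) (\<lambda>x. x i)"
      using A_ident[OF u] by simp
    also have "\<dots> = integrable M (\<lambda>\<omega>. A 1 \<omega> i)"
      using integrable_distr_eq[OF m c] i by simp
    finally have int: "integrable M (\<lambda>\<omega>. A u \<omega> i) = integrable M (\<lambda>\<omega>. A 1 \<omega> i)" .
    have "(\<integral>\<omega>. A u \<omega> i \<partial>M) = integral\<^sup>L (distr M (PiM I (\<lambda>_. borel)) (\<lambda>\<omega>. restrict (A u \<omega>) I)) (\<lambda>x. x i)"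
      using integral_distr[OF m c] i by simp
    also have "\<dots> = integral\<^sup>L (distr M (PiM I (\<lambda>_. borel)) (\<lambda>\<omega>. restrict (A 1 \<omega>) I)) (\<lambda>x. x i)"
      using A_ident[OF u] by simp
    also have "\<dots> = (\<integral>\<omega>. A 1 \<omega> i \<partial>M)"
      using integral_distr[OF m c] i by simp
    finally show "integrable M (\<lambda>\<omega>. A u \<omega> i) \<and> (\<integral>\<omega>. A u \<omega> i \<partial>M) = a i"
      using int A_mean[OF i] by simp
  qed
  have D_meas: "\<And>t i. i \<in> I \<Longrightarrow> (\<lambda>\<omega>. D t \<omega> i) \<in> borel_measurable M"
    unfolding D_def using S_meas Q_meas by (intro borel_measurable_min) auto
  have D_int: "\<And>t i. i \<in> I \<Longrightarrow> integrable M (\<lambda>\<omega>. D t \<omega> i)"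
  proof -
    fix t i assume i: "i \<in> I"
    have "AE \<omega> in M. norm (D t \<omega> i) \<le> Smax"
    proof (rule AE_I2)
      fix \<omega> assume "\<omega> \<in> space M"
      then show "norm (D t \<omega> i) \<le> Smax" using Dnn[of \<omega> i t] i by auto
    qed
    then show "integrable M (\<lambda>\<omega>. D t \<omega> i)" using D_meas[OF i] by (rule integrable_const_bound)
  qed
  have p_int: "\<And>t i' i. (i', i) \<in> L \<Longrightarrow> integrable M (\<lambda>\<omega>. p t \<omega> i' i)"
  proof -
    fix t i' i assume l: "(i', i) \<in> L"
    have "AE \<omega> in M. norm (p t \<omega> i' i) \<le> 1"
    proof (rule AE_I2)
      fix \<omega> assume "\<omega> \<in> space M"
      then show "norm (p t \<omega> i' i) \<le> 1" using p_range[of \<omega> i' i t] l by auto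
    qed
    then show "integrable M (\<lambda>\<omega>. p t \<omega> i' i)" using p_meas[OF l] by (rule integrable_const_bound)
  qed
  have P_bnd: "\<And>t \<omega> j \<sigma>. \<omega> \<in> space M \<Longrightarrow> j \<in> J \<Longrightarrow> \<sigma> \<in> Ph j \<Longrightarrow> 0 \<le> P t \<omega> j \<sigma> \<and> P t \<omega> j \<sigma> \<le> 1"
  proof -
    fix t \<omega> j \<sigma> assume w: "\<omega> \<in> space M" and j: "j \<in> J" and s: "\<sigma> \<in> Ph j"
    have "P t \<omega> j \<sigma> \<le> (\<Sum>\<sigma>'\<in>Ph j. P t \<omega> j \<sigma>')"
      using finPh[OF j] s P_nonneg[OF w j] by (intro member_le_sum) auto
    then show "0 \<le> P t \<omega> j \<sigma> \<and> P t \<omega> j \<sigma> \<le> 1"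
      using P_nonneg[OF w j s, of t] P_sum[OF w j, of t] LT by linarith
  qed
  have P_int: "\<And>t j \<sigma>. j \<in> J \<Longrightarrow> \<sigma> \<in> Ph j \<Longrightarrow> integrable M (\<lambda>\<omega>. P t \<omega> j \<sigma>)"
  proof -
    fix t j \<sigma> assume j: "j \<in> J" and s: "\<sigma> \<in> Ph j"
    have "AE \<omega> in M. norm (P t \<omega> j \<sigma>) \<le> 1"
    proof (rule AE_I2)
      fix \<omega> assume "\<omega> \<in> space M"
      then show "norm (P t \<omega> j \<sigma>) \<le> 1" using P_bnd[of \<omega> j \<sigma> t] j s by auto
    qed
    then show "integrable M (\<lambda>\<omega>. P t \<omega> j \<sigma>)" using P_meas[OF j s] by (rule integrable_const_bound)
  qed
  define ED where "ED u i = (\<integral>\<omega>. D u \<omega> i \<partial>M)" for u i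
  define EP where "EP u j \<sigma> = (\<integral>\<omega>. P u \<omega> j \<sigma> \<partial>M)" for u j \<sigma>
  have Dp: "\<And>u i' i. (i', i) \<in> L \<Longrightarrow> (\<integral>\<omega>. D u \<omega> i' * p u \<omega> i' i \<partial>M) = ED u i' * pbar i' i"
  proof -
    fix u i' i assume l: "(i', i) \<in> L"
    have i'I: "i' \<in> I" using l links by auto
    define fp where "fp = (\<lambda>\<omega>. \<lambda>l\<in>L. p u \<omega> (fst l) (snd l))"
    define fqs where "fqs = (\<lambda>\<omega>. (restrict (Q u \<omega>) I, restrict (S u \<omega>) I))"
    have X: "(\<lambda>\<omega>. p u \<omega> i' i) \<in> borel_measurable (vimage_algebra (space M) fp (PiM L (\<lambda>_. borel)))"
    proof -
      have "fp \<in> space M \<rightarrow> space (PiM L (\<lambda>_. borel))" by (auto simp: fp_def space_PiM)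
      from measurable_comp[OF measurable_vimage_algebra1[OF this] measurable_component_singleton[OF l]]
      have "(\<lambda>\<omega>. fp \<omega> (i', i)) \<in> borel_measurable (vimage_algebra (space M) fp (PiM L (\<lambda>_. borel)))"
        by (simp add: comp_def)
      then show ?thesis using l by (simp add: fp_def)
    qed
    have Y: "(\<lambda>\<omega>. D u \<omega> i') \<in> borel_measurable
        (vimage_algebra (space M) fqs (PiM I (\<lambda>_. borel) \<Otimes>\<^sub>M PiM I (\<lambda>_. borel)))"
    proof -
      have sp: "fqs \<in> space M \<rightarrow> space (PiM I (\<lambda>_. borel) \<Otimes>\<^sub>M PiM I (\<lambda>_. borel))"
        by (auto simp: fqs_def space_PiM space_pair_measure)
      have m1: "(\<lambda>x. snd x i' :: real) \<in> borel_measurable (PiM I (\<lambda>_. borel) \<Otimes>\<^sub>M PiM I (\<lambda>_. borel))"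
        using measurable_comp[OF measurable_snd measurable_component_singleton[OF i'I]] by (simp add: comp_def)
      have m2: "(\<lambda>x. fst x i' :: real) \<in> borel_measurable (PiM I (\<lambda>_. borel) \<Otimes>\<^sub>M PiM I (\<lambda>_. borel))"
        using measurable_comp[OF measurable_fst measurable_component_singleton[OF i'I]] by (simp add: comp_def)
      have "(\<lambda>x. min (snd x i') (fst x i') :: real) \<in> borel_measurable (PiM I (\<lambda>_. borel) \<Otimes>\<^sub>M PiM I (\<lambda>_. borel))"
        by (intro borel_measurable_min m1 m2)
      from measurable_comp[OF measurable_vimage_algebra1[OF sp] this]
      have "(\<lambda>\<omega>. min (snd (fqs \<omega>) i') (fst (fqs \<omega>) i')) \<in> borel_measurable
        (vimage_algebra (space M) fqs (PiM I (\<lambda>_. borel) \<Otimes>\<^sub>M PiM I (\<lambda>_. borel)))"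
        by (simp add: comp_def)
      then show ?thesis using i'I by (simp add: fqs_def D_def)
    qed
    have ind: "indep_set (sets (vimage_algebra (space M) fp (PiM L (\<lambda>_. borel))))
        (sets (vimage_algebra (space M) fqs (PiM I (\<lambda>_. borel) \<Otimes>\<^sub>M PiM I (\<lambda>_. borel))))"
      unfolding fp_def fqs_def by (rule p_indep)
    have "(\<integral>\<omega>. D u \<omega> i' * p u \<omega> i' i \<partial>M) = (\<integral>\<omega>. D u \<omega> i' \<partial>M) * (\<integral>\<omega>. p u \<omega> i' i \<partial>M)"
      by (rule indep_prod_integral[OF ind _ _ X Y p_int[OF l] D_int[OF i'I]]) simp_all
    then show "(\<integral>\<omega>. D u \<omega> i' * p u \<omega> i' i \<partial>M) = ED u i' * pbar i' i"
      using p_mean[OF l] by (simp add: ED_def)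
  qed
  have S_exp: "\<And>u i. i \<in> I \<Longrightarrow> ED u i \<le> (\<Sum>\<sigma>\<in>Ph (jun i). EP u (jun i) \<sigma> * \<sigma> i)"
  proof -
    fix u i assume i: "i \<in> I"
    define F where "F = gen_sigma M I (Q u)"
    have fm: "(\<lambda>\<omega>. restrict (Q u \<omega>) I) \<in> measurable M (PiM I (\<lambda>_. borel))"
      using Q_meas by (intro measurable_restrict) auto
    have sub: "subalgebra M F"
      unfolding subalgebra_def F_def gen_sigma_def
    proof
      have "sets (vimage_algebra (space M) (\<lambda>\<omega>. restrict (Q u \<omega>) I) (PiM I (\<lambda>_. borel)))
          = {(\<lambda>\<omega>. restrict (Q u \<omega>) I) -` A \<inter> space M | A. A \<in> sets (PiM I (\<lambda>_. borel))}"
        using measurable_space[OF fm] by (intro sets_vimage_algebra2) auto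
      then show "sets (vimage_algebra (space M) (\<lambda>\<omega>. restrict (Q u \<omega>) I) (PiM I (\<lambda>_. borel))) \<subseteq> sets M"
        using measurable_sets[OF fm] by auto
      show "space (vimage_algebra (space M) (\<lambda>\<omega>. restrict (Q u \<omega>) I) (PiM I (\<lambda>_. borel))) = space M"
        by simp
    qed
    have fsub: "finite_measure_subalgebra M F"
      unfolding finite_measure_subalgebra_def finite_measure_subalgebra_axioms_def
      using sub by (simp add: finite_measure_axioms)
    interpret sfs: sigma_finite_subalgebra M F
      by (rule finite_measure_subalgebra_is_sigma_finite[OF fsub])
    have Sint: "integrable M (\<lambda>\<omega>. S u \<omega> i)"
    proof -
      have "AE \<omega> in M. norm (S u \<omega> i) \<le> Smax"
      proof (rule AE_I2)
        fix \<omega> assume "\<omega> \<in> space M"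
        then show "norm (S u \<omega> i) \<le> Smax" using Snn[of \<omega> i u] S_bound[of \<omega> i u] i by auto
      qed
      then show ?thesis using S_meas[OF i] by (rule integrable_const_bound)
    qed
    have ji: "jun i \<in> J" using jun[OF i] by simp
    have RHSm: "(\<lambda>\<omega>. \<Sum>\<sigma>\<in>Ph (jun i). \<sigma> i * P u \<omega> (jun i) \<sigma>) \<in> borel_measurable M"
      using P_meas ji by (intro borel_measurable_sum borel_measurable_times borel_measurable_const) auto
    have "ED u i \<le> (\<integral>\<omega>. S u \<omega> i \<partial>M)"
      unfolding ED_def using D_int[OF i] Sint Dnn i by (intro integral_mono) auto
    also have "\<dots> = (\<integral>\<omega>. real_cond_exp M F (\<lambda>\<omega>. S u \<omega> i) \<omega> \<partial>M)"
      using sfs.real_cond_exp_int(2)[OF Sint] by simp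
    also have "\<dots> = (\<integral>\<omega>. (\<Sum>\<sigma>\<in>Ph (jun i). \<sigma> i * P u \<omega> (jun i) \<sigma>) \<partial>M)"
    proof (rule integral_cong_AE)
      show "real_cond_exp M F (\<lambda>\<omega>. S u \<omega> i) \<in> borel_measurable M"
        using sfs.real_cond_exp_int(1)[OF Sint] by (rule borel_measurable_integrable)
      show "(\<lambda>\<omega>. \<Sum>\<sigma>\<in>Ph (jun i). \<sigma> i * P u \<omega> (jun i) \<sigma>) \<in> borel_measurable M" by (rule RHSm)
      show "AE \<omega> in M. real_cond_exp M F (\<lambda>\<omega>. S u \<omega> i) \<omega> = (\<Sum>\<sigma>\<in>Ph (jun i). \<sigma> i * P u \<omega> (jun i) \<sigma>)"
        using S_cond[OF i, of u] unfolding F_def .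
    qed
    also have "\<dots> = (\<Sum>\<sigma>\<in>Ph (jun i). \<integral>\<omega>. \<sigma> i * P u \<omega> (jun i) \<sigma> \<partial>M)"
      by (rule Bochner_Integration.integral_sum) (use P_int ji in auto)
    also have "\<dots> = (\<Sum>\<sigma>\<in>Ph (jun i). EP u (jun i) \<sigma> * \<sigma> i)"
      by (simp add: EP_def mult.commute)
    finally show "ED u i \<le> (\<Sum>\<sigma>\<in>Ph (jun i). EP u (jun i) \<sigma> * \<sigma> i)" .
  qed
  have Eg: "\<And>u i. u \<ge> 1 \<Longrightarrow> i \<in> I \<Longrightarrow> integrable M (\<lambda>\<omega>. g u \<omega> i) \<and>
      (\<integral>\<omega>. g u \<omega> i \<partial>M) = a i + (\<Sum>i'\<in>{i'. (i', i) \<in> L}. ED u i' * pbar i' i) - ED u i"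
  proof -
    fix u :: nat and i assume u: "u \<ge> 1" and i: "i \<in> I"
    have iDp: "integrable M (\<lambda>\<omega>. D u \<omega> i' * p u \<omega> i' i)" if l: "i' \<in> {i'. (i', i) \<in> L}" for i'
    proof -
      have l': "(i', i) \<in> L" using l by simp
      have i'I: "i' \<in> I" using l' links by auto
      have "AE \<omega> in M. norm (D u \<omega> i' * p u \<omega> i' i) \<le> Smax"
      proof (rule AE_I2)
        fix \<omega> assume w: "\<omega> \<in> space M"
        have h1: "0 \<le> D u \<omega> i'" "D u \<omega> i' \<le> Smax" using Dnn[OF w i'I, of u] by auto
        have h2: "0 \<le> p u \<omega> i' i" "p u \<omega> i' i \<le> 1" using p_range[OF w l'] by auto
        have "D u \<omega> i' * p u \<omega> i' i \<le> Smax * 1"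
          using h1 h2 by (intro mult_mono) auto
        moreover have "0 \<le> D u \<omega> i' * p u \<omega> i' i" using h1 h2 by simp
        ultimately have "D u \<omega> i' * p u \<omega> i' i \<le> Smax * 1" "0 \<le> D u \<omega> i' * p u \<omega> i' i" by auto
        then show "norm (D u \<omega> i' * p u \<omega> i' i) \<le> Smax" by simp
      qed
      moreover have "(\<lambda>\<omega>. D u \<omega> i' * p u \<omega> i' i) \<in> borel_measurable M"
        using D_meas[OF i'I] p_meas[OF l'] by (rule borel_measurable_times)
      ultimately show ?thesis by (rule integrable_const_bound)
    qed
    have iS: "integrable M (\<lambda>\<omega>. \<Sum>i'\<in>{i'. (i', i) \<in> L}. D u \<omega> i' * p u \<omega> i' i)"
      using iDp by (rule Bochner_Integration.integrable_sum)
    have iA: "integrable M (\<lambda>\<omega>. A u \<omega> i)" and eA: "(\<integral>\<omega>. A u \<omega> i \<partial>M) = a i"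
      using A_int[OF u i] by auto
    have ig: "integrable M (\<lambda>\<omega>. g u \<omega> i)"
      unfolding g_def using iA iS D_int[OF i] by (intro Bochner_Integration.integrable_diff Bochner_Integration.integrable_add)
    have "(\<integral>\<omega>. g u \<omega> i \<partial>M) = (\<integral>\<omega>. A u \<omega> i + (\<Sum>i'\<in>{i'. (i', i) \<in> L}. D u \<omega> i' * p u \<omega> i' i) \<partial>M) - ED u i"
      unfolding g_def ED_def using iA iS D_int[OF i] by (intro Bochner_Integration.integral_diff Bochner_Integration.integrable_add)
    also have "(\<integral>\<omega>. A u \<omega> i + (\<Sum>i'\<in>{i'. (i', i) \<in> L}. D u \<omega> i' * p u \<omega> i' i) \<partial>M)
        = (\<integral>\<omega>. A u \<omega> i \<partial>M) + (\<integral>\<omega>. (\<Sum>i'\<in>{i'. (i', i) \<in> L}. D u \<omega> i' * p u \<omega> i' i) \<partial>M)"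
      using iA iS by (rule Bochner_Integration.integral_add)
    also have "(\<integral>\<omega>. (\<Sum>i'\<in>{i'. (i', i) \<in> L}. D u \<omega> i' * p u \<omega> i' i) \<partial>M)
        = (\<Sum>i'\<in>{i'. (i', i) \<in> L}. \<integral>\<omega>. D u \<omega> i' * p u \<omega> i' i \<partial>M)"
      using iDp by (rule Bochner_Integration.integral_sum)
    also have "\<dots> = (\<Sum>i'\<in>{i'. (i', i) \<in> L}. ED u i' * pbar i' i)"
      by (rule sum.cong[OF refl]) (use Dp in auto)
    finally show "integrable M (\<lambda>\<omega>. g u \<omega> i) \<and>
      (\<integral>\<omega>. g u \<omega> i \<partial>M) = a i + (\<Sum>i'\<in>{i'. (i', i) \<in> L}. ED u i' * pbar i' i) - ED u i"
      using ig eA by simp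
  qed
  have ED_bnd: "\<And>u i. i \<in> I \<Longrightarrow> 0 \<le> ED u i \<and> ED u i \<le> Smax"
  proof -
    fix u i assume i: "i \<in> I"
    have "0 \<le> ED u i" unfolding ED_def
      by (intro integral_nonneg_AE AE_I2) (use Dnn i in auto)
    moreover have "ED u i \<le> Smax" unfolding ED_def
      by (intro integral_le_const D_int[OF i] AE_I2) (use Dnn i in auto)
    ultimately show "0 \<le> ED u i \<and> ED u i \<le> Smax" by simp
  qed
  have EP_bnd: "\<And>u j \<sigma>. j \<in> J \<Longrightarrow> \<sigma> \<in> Ph j \<Longrightarrow> 0 \<le> EP u j \<sigma> \<and> EP u j \<sigma> \<le> 1"
  proof -
    fix u j \<sigma> assume j: "j \<in> J" and s: "\<sigma> \<in> Ph j"
    have "0 \<le> EP u j \<sigma>" unfolding EP_def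
      by (intro integral_nonneg_AE AE_I2) (use P_bnd j s in auto)
    moreover have "EP u j \<sigma> \<le> 1" unfolding EP_def
      by (intro integral_le_const P_int[OF j s] AE_I2) (use P_bnd j s in auto)
    ultimately show "0 \<le> EP u j \<sigma> \<and> EP u j \<sigma> \<le> 1" by simp
  qed
  have EP_sum: "\<And>u j. j \<in> J \<Longrightarrow> (\<Sum>\<sigma>\<in>Ph j. EP u j \<sigma>) \<le> 1 - L0 / T"
  proof -
    fix u j assume j: "j \<in> J"
    have "(\<Sum>\<sigma>\<in>Ph j. EP u j \<sigma>) = (\<integral>\<omega>. (\<Sum>\<sigma>\<in>Ph j. P u \<omega> j \<sigma>) \<partial>M)"
      unfolding EP_def by (rule Bochner_Integration.integral_sum[symmetric]) (use P_int j in auto)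
    also have "\<dots> \<le> 1 - L0 / T"
      by (intro integral_le_const Bochner_Integration.integrable_sum P_int[OF j] AE_I2) (use P_sum j in auto)
    finally show "(\<Sum>\<sigma>\<in>Ph j. EP u j \<sigma>) \<le> 1 - L0 / T" .
  qed
  define C where "C = (\<lambda>\<tau>. \<integral>\<^sup>+\<omega>. ennreal ((1 / real \<tau>) * (\<Sum>t\<in>{1..\<tau>}. \<Sum>i\<in>I. Q t \<omega> i)) \<partial>M)"
  have key: "\<And>\<tau> B. \<tau> \<ge> 2 \<Longrightarrow> B \<ge> 0 \<Longrightarrow> C \<tau> \<le> ennreal B \<Longrightarrow> \<exists>\<rho> s.
        (\<forall>j\<in>J. \<forall>\<sigma>\<in>Ph j. 0 \<le> \<rho> j \<sigma> \<and> \<rho> j \<sigma> \<le> 1) \<and>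
        (\<forall>j\<in>J. (\<Sum>\<sigma>\<in>Ph j. \<rho> j \<sigma>) \<le> 1 - L0 / T) \<and>
        (\<forall>i\<in>I. 0 \<le> s i \<and> s i \<le> Smax) \<and>
        (\<forall>i\<in>I. s i \<le> (\<Sum>\<sigma>\<in>Ph (jun i). \<rho> (jun i) \<sigma> * \<sigma> i)) \<and>
        (\<forall>i\<in>I. a i + (\<Sum>i'\<in>{i'. (i', i) \<in> L}. s i' * pbar i' i) - s i \<le> 2 * B / (real \<tau> - 1))"
  proof -
    fix \<tau> :: nat and B :: real assume t2: "\<tau> \<ge> 2" and B0: "B \<ge> 0" and hC: "C \<tau> \<le> ennreal B"
    define W where "W = (\<Sum>t\<in>{1..\<tau>}. \<Sum>u\<in>{1..<t}. (1::real))"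
    have W2: "2 * W = real \<tau> * (real \<tau> - 1)" unfolding W_def by (rule double_count)
    have tpos: "real \<tau> > 0" "real \<tau> - 1 > 0" using t2 by auto
    have "real \<tau> * (real \<tau> - 1) > 0" using tpos by (rule mult_pos_pos)
    then have Wpos: "W > 0" using W2 by linarith
    define EDs where "EDs i = (\<Sum>t\<in>{1..\<tau>}. \<Sum>u\<in>{1..<t}. ED u i)" for i
    define EPs where "EPs j \<sigma> = (\<Sum>t\<in>{1..\<tau>}. \<Sum>u\<in>{1..<t}. EP u j \<sigma>)" for j \<sigma>
    define s where "s i = EDs i / W" for i
    define \<rho> where "\<rho> j \<sigma> = EPs j \<sigma> / W" for j \<sigma>
    have errI: "W * a i + (\<Sum>i'\<in>{i'. (i', i) \<in> L}. EDs i' * pbar i' i) - EDs i \<le> B * real \<tau>"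
      if i: "i \<in> I" for i
    proof -
      define X where "X \<omega> = (1 / real \<tau>) * (\<Sum>t\<in>{1..\<tau>}. \<Sum>u\<in>{1..<t}. g u \<omega> i)" for \<omega>
      have gi: "integrable M (\<lambda>\<omega>. g u \<omega> i)" if "u \<in> {1..<t}" for u t
        using Eg[of u i] i that by auto
      have iin: "integrable M (\<lambda>\<omega>. \<Sum>u\<in>{1..<t}. g u \<omega> i)" for t
        by (rule Bochner_Integration.integrable_sum) (rule gi)
      have iX: "integrable M X" unfolding X_def
        by (intro integrable_mult_right Bochner_Integration.integrable_sum iin)
      have "(\<integral>\<omega>. (\<Sum>t\<in>{1..\<tau>}. \<Sum>u\<in>{1..<t}. g u \<omega> i) \<partial>M) = (\<Sum>t\<in>{1..\<tau>}. \<integral>\<omega>. (\<Sum>u\<in>{1..<t}. g u \<omega> i) \<partial>M)"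
        by (rule Bochner_Integration.integral_sum) (rule iin)
      also have "\<dots> = (\<Sum>t\<in>{1..\<tau>}. \<Sum>u\<in>{1..<t}. \<integral>\<omega>. g u \<omega> i \<partial>M)"
        by (rule sum.cong[OF refl]) (rule Bochner_Integration.integral_sum, rule gi)
      also have "\<dots> = (\<Sum>t\<in>{1..\<tau>}. \<Sum>u\<in>{1..<t}. a i + (\<Sum>i'\<in>{i'. (i', i) \<in> L}. ED u i' * pbar i' i) - ED u i)"
        by (intro sum.cong refl) (use Eg i in auto)
      also have "\<dots> = W * a i + (\<Sum>i'\<in>{i'. (i', i) \<in> L}. EDs i' * pbar i' i) - EDs i"
        unfolding W_def EDs_def by (rule dsum_lin)
      finally have intX: "(\<integral>\<omega>. X \<omega> \<partial>M) = (1 / real \<tau>) * (W * a i + (\<Sum>i'\<in>{i'. (i', i) \<in> L}. EDs i' * pbar i' i) - EDs i)"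
        unfolding X_def by simp
      have Xle: "X \<omega> \<le> (1 / real \<tau>) * (\<Sum>t\<in>{1..\<tau>}. \<Sum>i\<in>I. Q t \<omega> i)" if w: "\<omega> \<in> space M" for \<omega>
      proof -
        have "(\<Sum>t\<in>{1..\<tau>}. \<Sum>u\<in>{1..<t}. g u \<omega> i) \<le> (\<Sum>t\<in>{1..\<tau>}. Q t \<omega> i)"
          by (rule sum_mono) (use lower[OF w i] in auto)
        also have "\<dots> \<le> (\<Sum>t\<in>{1..\<tau>}. \<Sum>i\<in>I. Q t \<omega> i)"
          by (rule sum_mono, rule member_le_sum) (use i finI Qnn[OF w] in auto)
        finally show ?thesis unfolding X_def by (intro mult_left_mono) auto
      qed
      have "ennreal (\<integral>\<omega>. X \<omega> \<partial>M) \<le> (\<integral>\<^sup>+\<omega>. ennreal (X \<omega>) \<partial>M)"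
        by (rule integral_le_nn[OF iX])
      also have "\<dots> \<le> C \<tau>" unfolding C_def
        by (intro nn_integral_mono ennreal_leI Xle) simp
      also have "\<dots> \<le> ennreal B" by (rule hC)
      finally have "(\<integral>\<omega>. X \<omega> \<partial>M) \<le> B" using B0 by (simp add: ennreal_le_iff)
      then have "(1 / real \<tau>) * (W * a i + (\<Sum>i'\<in>{i'. (i', i) \<in> L}. EDs i' * pbar i' i) - EDs i) \<le> B"
        using intX by simp
      then show ?thesis using tpos by (simp add: divide_simps mult.commute)
    qed
    have h1: "\<forall>j\<in>J. \<forall>\<sigma>\<in>Ph j. 0 \<le> \<rho> j \<sigma> \<and> \<rho> j \<sigma> \<le> 1"
    proof (intro ballI)
      fix j \<sigma> assume j: "j \<in> J" and sg: "\<sigma> \<in> Ph j"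
      have "0 \<le> EPs j \<sigma>" unfolding EPs_def
        by (intro sum_nonneg) (use EP_bnd j sg in auto)
      moreover have "EPs j \<sigma> \<le> W" unfolding EPs_def W_def
        by (intro sum_mono) (use EP_bnd j sg in auto)
      ultimately show "0 \<le> \<rho> j \<sigma> \<and> \<rho> j \<sigma> \<le> 1" using Wpos by (simp add: \<rho>_def divide_simps)
    qed
    have h2: "\<forall>j\<in>J. (\<Sum>\<sigma>\<in>Ph j. \<rho> j \<sigma>) \<le> 1 - L0 / T"
    proof (intro ballI)
      fix j assume j: "j \<in> J"
      have "(\<Sum>\<sigma>\<in>Ph j. EPs j \<sigma>) = (\<Sum>t\<in>{1..\<tau>}. \<Sum>u\<in>{1..<t}. \<Sum>\<sigma>\<in>Ph j. EP u j \<sigma>)"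
        unfolding EPs_def by (rule dsum_swap[symmetric])
      also have "\<dots> \<le> (\<Sum>t\<in>{1..\<tau>}. \<Sum>u\<in>{1..<t}. 1 - L0 / T)"
        by (intro sum_mono EP_sum j)
      also have "\<dots> = W * (1 - L0 / T)" unfolding W_def by (simp add: sum_distrib_right)
      finally have "(\<Sum>\<sigma>\<in>Ph j. EPs j \<sigma>) \<le> W * (1 - L0 / T)" .
      then show "(\<Sum>\<sigma>\<in>Ph j. \<rho> j \<sigma>) \<le> 1 - L0 / T"
        using Wpos unfolding \<rho>_def sum_divide_distrib[symmetric] by (simp add: divide_simps mult.commute)
    qed
    have h3: "\<forall>i\<in>I. 0 \<le> s i \<and> s i \<le> Smax"
    proof (intro ballI)
      fix i assume i: "i \<in> I"
      have "0 \<le> EDs i" unfolding EDs_def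
        by (intro sum_nonneg) (use ED_bnd i in auto)
      moreover have "EDs i \<le> W * Smax" unfolding EDs_def W_def sum_distrib_right
        by (intro sum_mono) (use ED_bnd i in auto)
      ultimately show "0 \<le> s i \<and> s i \<le> Smax" using Wpos by (simp add: s_def divide_simps mult.commute)
    qed
    have h4: "\<forall>i\<in>I. s i \<le> (\<Sum>\<sigma>\<in>Ph (jun i). \<rho> (jun i) \<sigma> * \<sigma> i)"
    proof (intro ballI)
      fix i assume i: "i \<in> I"
      have "EDs i \<le> (\<Sum>t\<in>{1..\<tau>}. \<Sum>u\<in>{1..<t}. \<Sum>\<sigma>\<in>Ph (jun i). EP u (jun i) \<sigma> * \<sigma> i)"
        unfolding EDs_def by (intro sum_mono S_exp i)
      also have "\<dots> = (\<Sum>\<sigma>\<in>Ph (jun i). EPs (jun i) \<sigma> * \<sigma> i)"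
        unfolding EPs_def by (simp add: dsum_swap sum_distrib_right)
      finally have "EDs i \<le> (\<Sum>\<sigma>\<in>Ph (jun i). EPs (jun i) \<sigma> * \<sigma> i)" .
      then show "s i \<le> (\<Sum>\<sigma>\<in>Ph (jun i). \<rho> (jun i) \<sigma> * \<sigma> i)"
        using Wpos unfolding s_def \<rho>_def by (simp add: sum_divide_distrib[symmetric] divide_right_mono)
    qed
    have h5: "\<forall>i\<in>I. a i + (\<Sum>i'\<in>{i'. (i', i) \<in> L}. s i' * pbar i' i) - s i \<le> 2 * B / (real \<tau> - 1)"
    proof (intro ballI)
      fix i assume i: "i \<in> I"
      have "a i + (\<Sum>i'\<in>{i'. (i', i) \<in> L}. s i' * pbar i' i) - s i
          = (W * a i + (\<Sum>i'\<in>{i'. (i', i) \<in> L}. EDs i' * pbar i' i) - EDs i) / W"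
        using Wpos unfolding s_def by (simp add: divide_simps sum_divide_distrib[symmetric])
      also have "\<dots> \<le> B * real \<tau> / W"
        using errI[OF i] Wpos by (simp add: divide_right_mono)
      also have "\<dots> = 2 * B / (real \<tau> - 1)"
        using W2 tpos Wpos by (simp add: divide_simps)
      finally show "a i + (\<Sum>i'\<in>{i'. (i', i) \<in> L}. s i' * pbar i' i) - s i \<le> 2 * B / (real \<tau> - 1)" .
    qed
    show "\<exists>\<rho> s.
        (\<forall>j\<in>J. \<forall>\<sigma>\<in>Ph j. 0 \<le> \<rho> j \<sigma> \<and> \<rho> j \<sigma> \<le> 1) \<and>
        (\<forall>j\<in>J. (\<Sum>\<sigma>\<in>Ph j. \<rho> j \<sigma>) \<le> 1 - L0 / T) \<and>
        (\<forall>i\<in>I. 0 \<le> s i \<and> s i \<le> Smax) \<and>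
        (\<forall>i\<in>I. s i \<le> (\<Sum>\<sigma>\<in>Ph (jun i). \<rho> (jun i) \<sigma> * \<sigma> i)) \<and>
        (\<forall>i\<in>I. a i + (\<Sum>i'\<in>{i'. (i', i) \<in> L}. s i' * pbar i' i) - s i \<le> 2 * B / (real \<tau> - 1))"
      by (intro exI[of _ \<rho>] exI[of _ s] conjI h1 h2 h3 h4 h5)
  qed
  show ?thesis
  proof (rule ccontr)
    assume nt: "\<not> ?thesis"
    have "\<not> (C \<longlongrightarrow> top) sequentially" using nt by (simp add: C_def)
    then obtain B where B0: "B \<ge> 0" and nev: "\<not> eventually (\<lambda>\<tau>. ennreal B < C \<tau>) sequentially"
      unfolding tendsto_top_iff_ennreal not_all not_imp by blast
    have freq: "\<exists>\<tau>\<ge>N. C \<tau> \<le> ennreal B" for N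
    proof (rule ccontr)
      assume na: "\<not> (\<exists>\<tau>\<ge>N. C \<tau> \<le> ennreal B)"
      have "\<forall>\<tau>\<ge>N. ennreal B < C \<tau>"
      proof (intro allI impI)
        fix \<tau> assume "\<tau> \<ge> N"
        then have "\<not> C \<tau> \<le> ennreal B" using na by blast
        then show "ennreal B < C \<tau>" by (simp add: not_le)
      qed
      then have "eventually (\<lambda>\<tau>. ennreal B < C \<tau>) sequentially"
        unfolding eventually_sequentially by blast
      with nev show False by simp
    qed
    have a_nn: "\<And>i. i \<in> in_roads J In \<Longrightarrow> a i \<ge> 0"
    proof -
      fix i assume i: "i \<in> in_roads J In"
      have "0 \<le> (\<integral>\<omega>. A 1 \<omega> i \<partial>M)"
        using A_nat i by (intro integral_nonneg_AE AE_I2 Nats_nonneg) (simp add: I_def)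
      then show "a i \<ge> 0" using A_mean i by (simp add: I_def)
    qed
    have "a \<in> closed_stab_region J In Ph L pbar T L0"
    proof (rule closed_region[where jun = jun and Smax = Smax, OF _ finPh finJ links[unfolded I_def] disj
          jun[unfolded I_def] a_nn])
      show "finite (in_roads J In)" using finI by (simp add: I_def)
    next
      fix \<epsilon> :: real assume e: "\<epsilon> > 0"
      define N where "N = nat \<lceil>2 * B / \<epsilon>\<rceil> + 2"
      obtain \<tau> where \<tau>: "\<tau> \<ge> N" "C \<tau> \<le> ennreal B" using freq by blast
      have t2: "\<tau> \<ge> 2" using \<tau> by (simp add: N_def)
      have "2 * B / \<epsilon> < real \<tau> - 1"
        using \<tau>(1) unfolding N_def by linarith
      then have "2 * B < \<epsilon> * (real \<tau> - 1)"
        using e by (simp add: divide_simps mult.commute)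
      then have err: "2 * B / (real \<tau> - 1) \<le> \<epsilon>"
        using t2 by (simp add: divide_simps)
      obtain \<rho> s where rs:
        "\<forall>j\<in>J. \<forall>\<sigma>\<in>Ph j. 0 \<le> \<rho> j \<sigma> \<and> \<rho> j \<sigma> \<le> 1"
        "\<forall>j\<in>J. (\<Sum>\<sigma>\<in>Ph j. \<rho> j \<sigma>) \<le> 1 - L0 / T"
        "\<forall>i\<in>I. 0 \<le> s i \<and> s i \<le> Smax"
        "\<forall>i\<in>I. s i \<le> (\<Sum>\<sigma>\<in>Ph (jun i). \<rho> (jun i) \<sigma> * \<sigma> i)"
        "\<forall>i\<in>I. a i + (\<Sum>i'\<in>{i'. (i', i) \<in> L}. s i' * pbar i' i) - s i \<le> 2 * B / (real \<tau> - 1)"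
        using key[OF t2 B0 \<tau>(2)] by blast
      show "\<exists>\<rho> s.
        (\<forall>j\<in>J. \<forall>\<sigma>\<in>Ph j. 0 \<le> \<rho> j \<sigma> \<and> \<rho> j \<sigma> \<le> 1) \<and>
        (\<forall>j\<in>J. (\<Sum>\<sigma>\<in>Ph j. \<rho> j \<sigma>) \<le> 1 - L0 / T) \<and>
        (\<forall>i\<in>in_roads J In. 0 \<le> s i \<and> s i \<le> Smax) \<and>
        (\<forall>i\<in>in_roads J In. s i \<le> (\<Sum>\<sigma>\<in>Ph (jun i). \<rho> (jun i) \<sigma> * \<sigma> i)) \<and>
        (\<forall>i\<in>in_roads J In. a i + (\<Sum>i'\<in>{i'. (i', i) \<in> L}. s i' * pbar i' i) - s i \<le> \<epsilon>)"
      proof (intro exI[of _ \<rho>] exI[of _ s] conjI)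
        show "\<forall>i\<in>in_roads J In. a i + (\<Sum>i'\<in>{i'. (i', i) \<in> L}. s i' * pbar i' i) - s i \<le> \<epsilon>"
          using rs(5) err unfolding I_def by (meson order_trans)
      qed (use rs in \<open>simp_all add: I_def\<close>)
    qed
    then show False using a_notin by simp
  qed
qed

end
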